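(* Consider the dual-frame setting and asymptotic framework described in the context, and suppose assumptions (A1), (A2) and (A4) hold. Let $\hat{e}_k=y_k-\mathbf{x}_k\hat{\beta}^{\circ}$ for $k\in s$. Then the variance estimator $$v(\hat{Y}_{GREG})=v(\hat{t}_{\hat{e}H})=v\Big(\sum_{k\in s_a}d_{Ak}\hat{e}_k+\eta\sum_{k\in s_{ab}}d_{Ak}\hat{e}_k\Big)+v\Big((1-\eta)\sum_{k\in s_{ba}}d_{Bk}\hat{e}_k+\sum_{k\in s_b}d_{Bk}\hat{e}_k\Big)$$ satisfies $v(\hat{Y}_{GREG})=V(\hat{t}_{eH})+o_p(N^2n_N^{-1})$, where $\hat{t}_{eH}=\sum_{k\in s}d_k^{\circ}e_k$ and $e_k=y_k-\mathbf{x}_k\mathbf{B}_U$.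
   Context: Finite population $\mathcal{U}=\{1,\dots,N\}$ covered by two sampling frames with unit sets $\mathcal{A},\mathcal{B}$, $\mathcal{A}\cup\mathcal{B}=\mathcal{U}$. Domains: $a=\mathcal{A}\cap\mathcal{B}^c$, $b=\mathcal{A}^c\cap\mathcal{B}$, $ab=\mathcal{A}\cap\mathcal{B}$, $ba$ a duplicate of $ab$. Independent samples $s_A$ from $\mathcal{A}$ (design $p_A$, weights $d_{Ak}=1/\pi_{Ak}$) and $s_B$ from $\mathcal{B}$ (design $p_B$, $d_{Bk}=1/\pi_{Bk}$), sizes $n_A,n_B$. $s_a=s_A\cap a$, $s_{ab}=s_A\cap ab$, $s_{ba}=s_B\cap ab$, $s_b=s_B\cap b$, $s$ their union (overlap records from the two samples kept separately). For fixed $\eta\in(0,1)$, Hartley weights $d_k^\circ=d_{Ak}$ on $s_a$, $\eta d_{Ak}$ on $s_{ab}$, $(1-\eta)d_{Bk}$ on $s_{ba}$, $d_{Bk}$ on $s_b$. Study variable $y$ with total $Y$; Hartley estimator $\hat Y_H=\sum_{k\in s}d_k^\circ y_k$, with design variance $V(\hat{Y}_H)=V(\hat{Y}_a+\eta\hat{Y}_{ab})+V((1-\eta)\hat{Y}_{ba}+\hat{Y}_b)$ (first term under $p_A$, second under $p_B$); similarly for other totals. Auxiliary row vectors $\mathbf{x}_k\in\mathbb{R}^p$ with known total $\mathbf{t}_x=\sum_{k=1}^N\mathbf{x}_k$, $\hat{\mathbf{t}}_{xH}=\sum_{k\in s}d_k^\circ\mathbf{x}_k$. $\hat{\beta}^{\circ}=\big(\sum_{k\in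 s}d_k^{\circ}\mathbf{x}_k^T\mathbf{x}_k\big)^{-1}\sum_{k\in s}d_k^{\circ}\mathbf{x}_k^Ty_k$, $\mathbf{B}_U=\big(\sum_{k=1}^N\mathbf{x}_k^T\mathbf{x}_k\big)^{-1}\sum_{k=1}^N\mathbf{x}_k^Ty_k$, and $\hat{Y}_{GREG}=\hat{Y}_H+(\mathbf{t}_x-\hat{\mathbf{t}}_{xH})\hat{\beta}^{\circ}$. For each frame a variance (and covariance) estimator $v$ (resp. $c$) for the frame-specific Horvitz–Thompson-type estimators is available, and for Hartley-type estimators one sets $v(\hat{Y}_H)=v(\hat{Y}_a+\eta\hat{Y}_{ab})+v((1-\eta)\hat{Y}_{ba}+\hat{Y}_b)$, and similarly $\mathbf{c}(\hat{\mathbf{t}}_{xH},\hat Y_H)$, $\mathbf{v}(\hat{\mathbf{t}}_{xH})$. Asymptotic framework: a sequence $\{\mathcal{U}_N,p_{A_N},p_{B_N}\}$, $N\to\infty$, with $N_A,N_B,n_A,n_B\to\infty$, $N_a>0$, $N_b>0$, $n_A/n_N\to c_1\in(0,1)$ ($n_N=n_A+n_B$), $N_a/N_A\to c_2\in(0,1)$, $N_b/N_B\to c_3\in(0,1)$, $\eta$ fixed; $O_p,o_p$ with respect to the designs. (A1) $\lim_{N\to\infty}\mathbf{B}_U$ exists, and $\sum_{k=1}^N\mathbf{x}_k^T\mathbf{x}_k$, $\sum_{k=1}^N\mathbf{x}_k^Ty_k$ are consistently estimated by $\sum_{k\in s}d_k^\circ\mathbf{x}_k^T\mathbf{x}_k$,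 $\sum_{k\in s}d_k^\circ\mathbf{x}_k^Ty_k$. (A2) $\Sigma=\lim_{N\to\infty}\frac{n_N}{N^2}\begin{bmatrix}V(\hat{Y}_H)&\mathbf{C}(\hat{\mathbf{t}}_{xH},\hat{Y}_H)\\ \mathbf{C}(\hat{\mathbf{t}}_{xH},\hat{Y}_H)^T&\mathbf{V}(\hat{\mathbf{t}}_{xH})\end{bmatrix}$ exists and is positive definite. (A4) $\frac{n_N}{N^2}\begin{bmatrix}v(\hat{Y}_H)&\mathbf{c}(\hat{\mathbf{t}}_{xH},\hat{Y}_H)\\ \mathbf{c}(\hat{\mathbf{t}}_{xH},\hat{Y}_H)^T&\mathbf{v}(\hat{\mathbf{t}}_{xH})\end{bmatrix}-\Sigma=o_p(1)$. *)

theory Defs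
  imports "HOL-Probability.Probability"
begin

text \<open>For a fixed population index N we are given the frames
  A, B (subsets of the population), the designs pA, pB (probability mass functions on
  samples, i.e. on finite subsets of the frame), the overlap parameter eta, and the
  outcome of the two independent samples as a pair (SA, SB).\<close>

definition incl_prob :: "nat set pmf \<Rightarrow> nat \<Rightarrow> real" where
  "incl_prob p k = measure_pmf.prob p {S. k \<in> S}"

definition hmultA :: "real \<Rightarrow> nat set \<Rightarrow> nat \<Rightarrow> real" where
  "hmultA eta B k = (if k \<in> B then eta else 1)"

definition hmultB :: "real \<Rightarrow> nat set \<Rightarrow> nat \<Rightarrow> real" where
  "hmultB eta A k = (if k \<in> A then 1 - eta else 1)"

definition ht_total :: "nat set pmf \<Rightarrow> nat set \<Rightarrow> (nat \<Rightarrow> 'b::real_vector) \<Rightarrow> 'b" where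
  "ht_total p S u = (\<Sum>k\<in>S. (1 / incl_prob p k) *\<^sub>R u k)"

text \<open>Hartley estimator sum_{k in s} d_k^o f_k (overlap records of both samples kept separately).\<close>
definition hartley_sum ::
  "nat set pmf \<Rightarrow> nat set pmf \<Rightarrow> nat set \<Rightarrow> nat set \<Rightarrow> real \<Rightarrow> nat set \<times> nat set
    \<Rightarrow> (nat \<Rightarrow> 'b::real_vector) \<Rightarrow> 'b" where
  "hartley_sum pA pB A B eta s f =
     ht_total pA (fst s) (\<lambda>k. hmultA eta B k *\<^sub>R f k) +
     ht_total pB (snd s) (\<lambda>k. hmultB eta A k *\<^sub>R f k)"

definition pmf_cov :: "'a pmf \<Rightarrow> ('a \<Rightarrow> real) \<Rightarrow> ('a \<Rightarrow> real) \<Rightarrow> real" where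
  "pmf_cov p f g = measure_pmf.expectation p
     (\<lambda>\<omega>. (f \<omega> - measure_pmf.expectation p f) * (g \<omega> - measure_pmf.expectation p g))"

text \<open>With z = w this is the design variance V.\<close>
definition hartley_cov ::
  "nat set pmf \<Rightarrow> nat set pmf \<Rightarrow> nat set \<Rightarrow> nat set \<Rightarrow> real
    \<Rightarrow> (nat \<Rightarrow> real) \<Rightarrow> (nat \<Rightarrow> real) \<Rightarrow> real" where
  "hartley_cov pA pB A B eta z w =
     pmf_cov pA (\<lambda>S. ht_total pA S (\<lambda>k. hmultA eta B k * z k))
                (\<lambda>S. ht_total pA S (\<lambda>k. hmultA eta B k * w k)) +
     pmf_cov pB (\<lambda>S. ht_total pB S (\<lambda>k. hmultB eta A k * z k))
                (\<lambda>S. ht_total pB S (\<lambda>k. hmultB eta A k * w k))"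

text \<open>Frame-specific (quadratic / bilinear) variance-covariance estimator of HT-type
  estimators: for a sample S and variables u, w,
  c(t_u, t_w) = sum_{k in S} sum_{l in S} Om S k l u_k w_l,
  with v(t_u) = c(t_u, t_u); the kernel Om depends on the sample only.\<close>
definition quad_est :: "(nat set \<Rightarrow> nat \<Rightarrow> nat \<Rightarrow> real) \<Rightarrow> nat set
    \<Rightarrow> (nat \<Rightarrow> real) \<Rightarrow> (nat \<Rightarrow> real) \<Rightarrow> real" where
  "quad_est Om S u w = (\<Sum>k\<in>S. \<Sum>l\<in>S. Om S k l * u k * w l)"

text \<open>Hartley-type covariance estimator c(Z_H, W_H) = c_A(...) + c_B(...); with z = w it is v.
  The variables may depend on the realised samples.\<close>
definition hartley_cov_est ::
  "(nat set \<Rightarrow> nat \<Rightarrow> nat \<Rightarrow> real) \<Rightarrow> (nat set \<Rightarrow> nat \<Rightarrow> nat \<Rightarrow> real) \<Rightarrow> nat set \<Rightarrow> nat set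
    \<Rightarrow> real \<Rightarrow> nat set \<times> nat set \<Rightarrow> (nat \<Rightarrow> real) \<Rightarrow> (nat \<Rightarrow> real) \<Rightarrow> real" where
  "hartley_cov_est OmA OmB A B eta s z w =
     quad_est OmA (fst s) (\<lambda>k. hmultA eta B k * z k) (\<lambda>k. hmultA eta B k * w k) +
     quad_est OmB (snd s) (\<lambda>k. hmultB eta A k * z k) (\<lambda>k. hmultB eta A k * w k)"

definition outer :: "real ^ 'p \<Rightarrow> real ^ 'p ^ 'p" where
  "outer v = (\<chi> i j. v $ i * v $ j)"

definition op1 :: "(nat \<Rightarrow> 'a pmf) \<Rightarrow> (nat \<Rightarrow> 'a \<Rightarrow> real) \<Rightarrow> bool" where
  "op1 P X \<longleftrightarrow> (\<forall>\<epsilon>>0. ((\<lambda>N. measure_pmf.prob (P N) {\<omega>. \<epsilon> < \<bar>X N \<omega>\<bar>}) \<longlongrightarrow> 0) sequentially)"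

definition pos_def :: "('i::finite \<Rightarrow> 'i \<Rightarrow> real) \<Rightarrow> bool" where
  "pos_def M \<longleftrightarrow> (\<forall>a::'i \<Rightarrow> real. (\<exists>j. a j \<noteq> 0) \<longrightarrow> 0 < (\<Sum>j\<in>UNIV. \<Sum>l\<in>UNIV. a j * a l * M j l))"

text \<open>The joint variable (y, x): index None is y, index Some i is the i-th auxiliary.\<close>
definition yx_var :: "(nat \<Rightarrow> real) \<Rightarrow> (nat \<Rightarrow> real ^ 'p) \<Rightarrow> 'p option \<Rightarrow> nat \<Rightarrow> real" where
  "yx_var y x j k = (case j of None \<Rightarrow> y k | Some i \<Rightarrow> x k $ i)"

end

theory Submission
  imports Defs
begin

lemma prob_sandwich:
  fixes f g :: "nat \<Rightarrow> real"
  assumes "\<And>N. 0 \<le> f N" "eventually (\<lambda>N. f N \<le> g N) sequentially" "g \<longlonglongrightarrow> 0"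
  shows "f \<longlonglongrightarrow> 0"
  by (rule tendsto_sandwich[of "\<lambda>_. 0" f sequentially g]) (use assms in auto)

lemma op1_mono_event:
  assumes "op1 P Z" "c > 0"
    and "eventually (\<lambda>N. \<forall>\<omega>. \<epsilon> < \<bar>X N \<omega>\<bar> \<longrightarrow> c < \<bar>Z N \<omega>\<bar>) sequentially"
  shows "((\<lambda>N. measure_pmf.prob (P N) {\<omega>. \<epsilon> < \<bar>X N \<omega>\<bar>}) \<longlonglongrightarrow> 0)"
proof (rule prob_sandwich)
  show "(\<lambda>N. measure_pmf.prob (P N) {\<omega>. c < \<bar>Z N \<omega>\<bar>}) \<longlonglongrightarrow> 0"
    using assms(1,2) unfolding op1_def by blast
  show "eventually (\<lambda>N. measure_pmf.prob (P N) {\<omega>. \<epsilon> < \<bar>X N \<omega>\<bar>} \<le> measure_pmf.prob (P N) {\<omega>. c < \<bar>Z N \<omega>\<bar>}) sequentially"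
    using assms(3) by eventually_elim (auto intro!: measure_pmf.finite_measure_mono)
qed auto

lemma op1_dominate:
  assumes "op1 P Z" "K > 0"
    and "eventually (\<lambda>N. \<forall>\<omega>. \<bar>Z N \<omega>\<bar> \<le> d \<longrightarrow> \<bar>X N \<omega>\<bar> \<le> K * \<bar>Z N \<omega>\<bar>) sequentially" "d > 0"
  shows "op1 P X"
  unfolding op1_def
proof (intro allI impI)
  fix \<epsilon> :: real assume e: "\<epsilon> > 0"
  show "(\<lambda>N. measure_pmf.prob (P N) {\<omega>. \<epsilon> < \<bar>X N \<omega>\<bar>}) \<longlonglongrightarrow> 0"
  proof (rule op1_mono_event[OF assms(1), of "min d (\<epsilon>/K)"])
    show "0 < min d (\<epsilon> / K)" using e assms by auto
    show "eventually (\<lambda>N. \<forall>\<omega>. \<epsilon> < \<bar>X N \<omega>\<bar> \<longrightarrow> min d (\<epsilon> / K) < \<bar>Z N \<omega>\<bar>) sequentially"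
      using assms(3)
    proof eventually_elim
      case (elim N)
      show ?case
      proof (intro allI impI)
        fix \<omega> assume h: "\<epsilon> < \<bar>X N \<omega>\<bar>"
        show "min d (\<epsilon> / K) < \<bar>Z N \<omega>\<bar>"
        proof (cases "\<bar>Z N \<omega>\<bar> \<le> d")
          case True
          then have "\<epsilon> < K * \<bar>Z N \<omega>\<bar>" using elim h by force
          then have "\<epsilon> / K < \<bar>Z N \<omega>\<bar>" using assms(2) by (simp add: field_simps)
          then show ?thesis by linarith
        qed auto
      qed
    qed
  qed
qed

lemma op1_add:
  assumes "op1 P X" "op1 P Y"
  shows "op1 P (\<lambda>N \<omega>. X N \<omega> + Y N \<omega>)"
  unfolding op1_def
proof (intro allI impI)
  fix \<epsilon> :: real assume e: "\<epsilon> > 0"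
  have a: "(\<lambda>N. measure_pmf.prob (P N) {\<omega>. \<epsilon>/2 < \<bar>X N \<omega>\<bar>}) \<longlonglongrightarrow> 0"
    "(\<lambda>N. measure_pmf.prob (P N) {\<omega>. \<epsilon>/2 < \<bar>Y N \<omega>\<bar>}) \<longlonglongrightarrow> 0"
    using assms e unfolding op1_def by (metis half_gt_zero)+
  show "(\<lambda>N. measure_pmf.prob (P N) {\<omega>. \<epsilon> < \<bar>X N \<omega> + Y N \<omega>\<bar>}) \<longlonglongrightarrow> 0"
  proof (rule prob_sandwich)
    show "(\<lambda>N. measure_pmf.prob (P N) {\<omega>. \<epsilon>/2 < \<bar>X N \<omega>\<bar>} + measure_pmf.prob (P N) {\<omega>. \<epsilon>/2 < \<bar>Y N \<omega>\<bar>}) \<longlonglongrightarrow> 0"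
      using tendsto_add[OF a] by simp
    show "eventually (\<lambda>N. measure_pmf.prob (P N) {\<omega>. \<epsilon> < \<bar>X N \<omega> + Y N \<omega>\<bar>} \<le> measure_pmf.prob (P N) {\<omega>. \<epsilon>/2 < \<bar>X N \<omega>\<bar>} + measure_pmf.prob (P N) {\<omega>. \<epsilon>/2 < \<bar>Y N \<omega>\<bar>}) sequentially"
    proof (intro always_eventually allI)
      fix N
      have "measure_pmf.prob (P N) {\<omega>. \<epsilon> < \<bar>X N \<omega> + Y N \<omega>\<bar>} \<le> measure_pmf.prob (P N) ({\<omega>. \<epsilon>/2 < \<bar>X N \<omega>\<bar>} \<union> {\<omega>. \<epsilon>/2 < \<bar>Y N \<omega>\<bar>})"
        by (rule measure_pmf.finite_measure_mono) auto
      also have "\<dots> \<le> measure_pmf.prob (P N) {\<omega>. \<epsilon>/2 < \<bar>X N \<omega>\<bar>} + measure_pmf.prob (P N) {\<omega>. \<epsilon>/2 < \<bar>Y N \<omega>\<bar>}"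
        by (rule measure_Un_le) auto
      finally show "measure_pmf.prob (P N) {\<omega>. \<epsilon> < \<bar>X N \<omega> + Y N \<omega>\<bar>} \<le> measure_pmf.prob (P N) {\<omega>. \<epsilon>/2 < \<bar>X N \<omega>\<bar>} + measure_pmf.prob (P N) {\<omega>. \<epsilon>/2 < \<bar>Y N \<omega>\<bar>}" .
    qed
  qed auto
qed

lemma op1_mult:
  assumes "op1 P X" "op1 P Y"
  shows "op1 P (\<lambda>N \<omega>. X N \<omega> * Y N \<omega>)"
  unfolding op1_def
proof (intro allI impI)
  fix \<epsilon> :: real assume e: "\<epsilon> > 0"
  have a: "(\<lambda>N. measure_pmf.prob (P N) {\<omega>. 1 < \<bar>X N \<omega>\<bar>}) \<longlonglongrightarrow> 0"
    "(\<lambda>N. measure_pmf.prob (P N) {\<omega>. \<epsilon> < \<bar>Y N \<omega>\<bar>}) \<longlonglongrightarrow> 0"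
    using assms e unfolding op1_def by auto
  show "(\<lambda>N. measure_pmf.prob (P N) {\<omega>. \<epsilon> < \<bar>X N \<omega> * Y N \<omega>\<bar>}) \<longlonglongrightarrow> 0"
  proof (rule prob_sandwich)
    show "(\<lambda>N. measure_pmf.prob (P N) {\<omega>. 1 < \<bar>X N \<omega>\<bar>} + measure_pmf.prob (P N) {\<omega>. \<epsilon> < \<bar>Y N \<omega>\<bar>}) \<longlonglongrightarrow> 0"
      using tendsto_add[OF a] by simp
    show "eventually (\<lambda>N. measure_pmf.prob (P N) {\<omega>. \<epsilon> < \<bar>X N \<omega> * Y N \<omega>\<bar>} \<le> measure_pmf.prob (P N) {\<omega>. 1 < \<bar>X N \<omega>\<bar>} + measure_pmf.prob (P N) {\<omega>. \<epsilon> < \<bar>Y N \<omega>\<bar>}) sequentially"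
    proof (intro always_eventually allI)
      fix N
      have sub: "{\<omega>. \<epsilon> < \<bar>X N \<omega> * Y N \<omega>\<bar>} \<subseteq> {\<omega>. 1 < \<bar>X N \<omega>\<bar>} \<union> {\<omega>. \<epsilon> < \<bar>Y N \<omega>\<bar>}"
      proof
        fix \<omega> assume "\<omega> \<in> {\<omega>. \<epsilon> < \<bar>X N \<omega> * Y N \<omega>\<bar>}"
        then have h: "\<epsilon> < \<bar>X N \<omega>\<bar> * \<bar>Y N \<omega>\<bar>" by (simp add: abs_mult)
        show "\<omega> \<in> {\<omega>. 1 < \<bar>X N \<omega>\<bar>} \<union> {\<omega>. \<epsilon> < \<bar>Y N \<omega>\<bar>}"
        proof (rule ccontr)
          assume "\<omega> \<notin> {\<omega>. 1 < \<bar>X N \<omega>\<bar>} \<union> {\<omega>. \<epsilon> < \<bar>Y N \<omega>\<bar>}"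
          then have "\<bar>X N \<omega>\<bar> \<le> 1" "\<bar>Y N \<omega>\<bar> \<le> \<epsilon>" by auto
          then have "\<bar>X N \<omega>\<bar> * \<bar>Y N \<omega>\<bar> \<le> 1 * \<epsilon>" by (intro mult_mono) auto
          then show False using h by simp
        qed
      qed
      have "measure_pmf.prob (P N) {\<omega>. \<epsilon> < \<bar>X N \<omega> * Y N \<omega>\<bar>} \<le> measure_pmf.prob (P N) ({\<omega>. 1 < \<bar>X N \<omega>\<bar>} \<union> {\<omega>. \<epsilon> < \<bar>Y N \<omega>\<bar>})"
        by (rule measure_pmf.finite_measure_mono[OF sub]) auto
      also have "\<dots> \<le> measure_pmf.prob (P N) {\<omega>. 1 < \<bar>X N \<omega>\<bar>} + measure_pmf.prob (P N) {\<omega>. \<epsilon> < \<bar>Y N \<omega>\<bar>}"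
        by (rule measure_Un_le) auto
      finally show "measure_pmf.prob (P N) {\<omega>. \<epsilon> < \<bar>X N \<omega> * Y N \<omega>\<bar>} \<le> measure_pmf.prob (P N) {\<omega>. 1 < \<bar>X N \<omega>\<bar>} + measure_pmf.prob (P N) {\<omega>. \<epsilon> < \<bar>Y N \<omega>\<bar>}" .
    qed
  qed auto
qed

lemma op1_det:
  assumes "c \<longlonglongrightarrow> 0"
  shows "op1 P (\<lambda>N \<omega>. c N)"
  unfolding op1_def
proof (intro allI impI)
  fix \<epsilon> :: real assume e: "\<epsilon> > 0"
  have "eventually (\<lambda>N. \<bar>c N\<bar> < \<epsilon>) sequentially"
    using assms e by (metis (mono_tags) order_tendstoD(2) tendsto_rabs_zero)
  then have "eventually (\<lambda>N. measure_pmf.prob (P N) {\<omega>. \<epsilon> < \<bar>c N\<bar>} = 0) sequentially"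
    by eventually_elim auto
  then show "(\<lambda>N. measure_pmf.prob (P N) {\<omega>. \<epsilon> < \<bar>c N\<bar>}) \<longlonglongrightarrow> 0"
    by (rule tendsto_eventually)
qed

lemma op1_cmult:
  assumes "op1 P X" "\<And>N. \<bar>c N\<bar> \<le> K"
  shows "op1 P (\<lambda>N \<omega>. c N * X N \<omega>)"
proof (rule op1_dominate[OF assms(1), of "\<bar>K\<bar> + 1" 1])
  show "eventually (\<lambda>N. \<forall>\<omega>. \<bar>X N \<omega>\<bar> \<le> 1 \<longrightarrow> \<bar>c N * X N \<omega>\<bar> \<le> (\<bar>K\<bar> + 1) * \<bar>X N \<omega>\<bar>) sequentially"
  proof (intro always_eventually allI impI)
    fix N \<omega>
    have "\<bar>c N\<bar> \<le> \<bar>K\<bar> + 1" using assms(2)[of N] by linarith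
    then show "\<bar>c N * X N \<omega>\<bar> \<le> (\<bar>K\<bar> + 1) * \<bar>X N \<omega>\<bar>"
      by (simp add: abs_mult mult_right_mono)
  qed
qed auto

lemma op1_abs:
  assumes "op1 P X" shows "op1 P (\<lambda>N \<omega>. \<bar>X N \<omega>\<bar>)"
  using assms unfolding op1_def by simp

lemma op1_zero: "op1 P (\<lambda>N \<omega>. 0)"
  using op1_det[of "\<lambda>_. 0" P] by simp

lemma op1_sum:
  assumes "finite I" "\<And>i. i \<in> I \<Longrightarrow> op1 P (X i)"
  shows "op1 P (\<lambda>N \<omega>. \<Sum>i\<in>I. X i N \<omega>)"
  using assms
proof (induction I rule: finite_induct)
  case empty then show ?case by (simp add: op1_zero)
next
  case (insert a F)
  then show ?case using op1_add[of P "X a" "\<lambda>N \<omega>. \<Sum>i\<in>F. X i N \<omega>"] by simp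
qed

lemma op1_neg:
  assumes "op1 P X" shows "op1 P (\<lambda>N \<omega>. - X N \<omega>)"
  using assms unfolding op1_def by simp

lemma op1_diff:
  assumes "op1 P X" "op1 P Y"
  shows "op1 P (\<lambda>N \<omega>. X N \<omega> - Y N \<omega>)"
  using op1_add[OF assms(1) op1_neg[OF assms(2)]] by simp

lemma op1_cong:
  assumes "op1 P X" "\<And>N \<omega>. X N \<omega> = Y N \<omega>"
  shows "op1 P Y"
  using assms unfolding op1_def by simp


lemma op1_term:
  assumes E: "op1 P (\<lambda>N \<omega>. X N \<omega> - S)" and F: "(\<lambda>N. Y N - S) \<longlonglongrightarrow> 0"
    and a: "\<And>N. \<bar>a N\<bar> \<le> K" and b: "\<And>N. \<bar>b N\<bar> \<le> K"
    and d: "op1 P (\<lambda>N \<omega>. \<alpha> N \<omega> - a N)" and f: "op1 P (\<lambda>N \<omega>. \<beta> N \<omega> - b N)"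
  shows "op1 P (\<lambda>N \<omega>. \<alpha> N \<omega> * \<beta> N \<omega> * X N \<omega> - a N * b N * Y N)"
proof -
  have t1: "op1 P (\<lambda>N \<omega>. a N * (b N * (X N \<omega> - S)))"
    by (rule op1_cmult[OF op1_cmult[OF E b] a])
  have t2: "op1 P (\<lambda>N \<omega>. a N * (b N * (Y N - S)))"
    by (rule op1_cmult[OF op1_cmult[OF op1_det[OF F] b] a])
  have W: "op1 P (\<lambda>N \<omega>. a N * (\<beta> N \<omega> - b N) + b N * (\<alpha> N \<omega> - a N) + (\<alpha> N \<omega> - a N) * (\<beta> N \<omega> - b N))"
    by (intro op1_add op1_cmult[OF f a] op1_cmult[OF d b] op1_mult[OF d f])
  have t3: "op1 P (\<lambda>N \<omega>. S * (a N * (\<beta> N \<omega> - b N) + b N * (\<alpha> N \<omega> - a N) + (\<alpha> N \<omega> - a N) * (\<beta> N \<omega> - b N))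
     + (a N * (\<beta> N \<omega> - b N) + b N * (\<alpha> N \<omega> - a N) + (\<alpha> N \<omega> - a N) * (\<beta> N \<omega> - b N)) * (X N \<omega> - S))"
    by (intro op1_add op1_cmult[OF W, of "\<lambda>_. S" "\<bar>S\<bar>"] op1_mult[OF W E]) auto
  have eq: "\<And>N \<omega>. a N * (b N * (X N \<omega> - S)) - a N * (b N * (Y N - S)) +
    (S * (a N * (\<beta> N \<omega> - b N) + b N * (\<alpha> N \<omega> - a N) + (\<alpha> N \<omega> - a N) * (\<beta> N \<omega> - b N)) +
     (a N * (\<beta> N \<omega> - b N) + b N * (\<alpha> N \<omega> - a N) + (\<alpha> N \<omega> - a N) * (\<beta> N \<omega> - b N)) * (X N \<omega> - S)) =
    \<alpha> N \<omega> * \<beta> N \<omega> * X N \<omega> - a N * b N * Y N"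
    by algebra
  show ?thesis
    by (rule op1_cong[OF op1_add[OF op1_diff[OF t1 t2] t3] eq])
qed

lemma matrix_inv_right: "invertible A \<Longrightarrow> A ** matrix_inv A = mat 1"
  by (metis (mono_tags, lifting) invertible_def matrix_inv_def someI_ex)

lemma norm_mv_le:
  fixes G :: "real^'n^'m"
  shows "norm (G *v v) \<le> (\<Sum>i\<in>UNIV. \<Sum>j\<in>UNIV. \<bar>G$i$j\<bar>) * norm v"
proof -
  have "norm (G *v v) \<le> (\<Sum>i\<in>UNIV. \<bar>(G *v v)$i\<bar>)" by (rule norm_le_l1_cart)
  also have "\<dots> \<le> (\<Sum>i\<in>UNIV. (\<Sum>j\<in>UNIV. \<bar>G$i$j\<bar>) * norm v)"
  proof (rule sum_mono)
    fix i
    have "\<bar>(G *v v)$i\<bar> = \<bar>\<Sum>j\<in>UNIV. G$i$j * v$j\<bar>" by (simp add: matrix_vector_mult_def)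
    also have "\<dots> \<le> (\<Sum>j\<in>UNIV. \<bar>G$i$j * v$j\<bar>)" by (rule sum_abs)
    also have "\<dots> \<le> (\<Sum>j\<in>UNIV. \<bar>G$i$j\<bar> * norm v)"
      by (rule sum_mono) (simp add: abs_mult component_le_norm_cart mult_left_mono)
    finally show "\<bar>(G *v v)$i\<bar> \<le> (\<Sum>j\<in>UNIV. \<bar>G$i$j\<bar>) * norm v" by (simp add: sum_distrib_right)
  qed
  also have "\<dots> = (\<Sum>i\<in>UNIV. \<Sum>j\<in>UNIV. \<bar>G$i$j\<bar>) * norm v" by (simp add: sum_distrib_right)
  finally show ?thesis .
qed

lemma matrix_key:
  fixes Mi H :: "real^'n^'n" and Hy t :: "real^'n"
  defines "G \<equiv> Mi ** H - mat 1" and "h \<equiv> Mi *v (Hy - t)" and "B \<equiv> Mi *v t"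
  defines "Z \<equiv> (\<Sum>i\<in>UNIV. \<Sum>j\<in>UNIV. \<bar>G$i$j\<bar>) + (\<Sum>i\<in>UNIV. \<bar>h$i\<bar>)"
  assumes Z: "Z \<le> 1/2"
  shows "\<bar>(matrix_inv H *v Hy)$i - B$i\<bar> \<le> 2 * (1 + norm B) * Z"
proof -
  define S where "S = (\<Sum>i\<in>UNIV. \<Sum>j\<in>UNIV. \<bar>G$i$j\<bar>)"
  have S0: "0 \<le> S" unfolding S_def by (intro sum_nonneg) auto
  have h0: "0 \<le> (\<Sum>i\<in>UNIV. \<bar>h$i\<bar>)" by (intro sum_nonneg) auto
  have S: "S \<le> 1/2" using Z h0 unfolding Z_def S_def by linarith
  have MH: "Mi ** H = mat 1 + G" unfolding G_def by simp
  have Gv: "norm (G *v v) \<le> S * norm v" for v unfolding S_def by (rule norm_mv_le)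
  have inj: "inj ((*v) H)"
  proof (rule linear_injective_0[THEN iffD2])
    show "linear ((*v) H)" by (rule matrix_vector_mul_linear)
    show "\<forall>v. H *v v = 0 \<longrightarrow> v = 0"
    proof (intro allI impI)
      fix v assume "H *v v = 0"
      then have "(Mi ** H) *v v = 0" by (metis matrix_vector_mul_assoc matrix_vector_mult_0_right)
      then have "v + G *v v = 0" by (simp add: MH matrix_vector_mult_add_rdistrib)
      then have "v = - (G *v v)" by (simp add: eq_neg_iff_add_eq_0)
      then have "norm v = norm (G *v v)" by (metis norm_minus_cancel)
      have "S * norm v \<le> 1/2 * norm v" by (rule mult_right_mono[OF S]) simp
      with Gv[of v] \<open>norm v = norm (G *v v)\<close> have "norm v \<le> 1/2 * norm v" by linarith
      then show "v = 0" by simp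
    qed
  qed
  then have "invertible H"
    using matrix_left_invertible_injective invertible_left_inverse by blast
  then have HH: "H ** matrix_inv H = mat 1" by (rule matrix_inv_right)
  define bh where "bh = matrix_inv H *v Hy"
  have Hb: "H *v bh = Hy" unfolding bh_def by (simp add: matrix_vector_mul_assoc HH)
  have "(Mi ** H) *v bh = Mi *v Hy" by (metis Hb matrix_vector_mul_assoc)
  also have "\<dots> = h + B" unfolding h_def B_def by (simp add: matrix_vector_mult_diff_distrib)
  finally have "bh + G *v bh = h + B" by (simp add: MH matrix_vector_mult_add_rdistrib)
  then have eq: "bh - B = h - G *v B - G *v (bh - B)"
    by (simp add: matrix_vector_mult_diff_distrib algebra_simps)
  have t1: "norm (h - G *v B - G *v (bh - B)) \<le> norm (h - G *v B) + norm (G *v (bh - B))"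
    by (rule norm_triangle_ineq4)
  have t2: "norm (h - G *v B) \<le> norm h + norm (G *v B)" by (rule norm_triangle_ineq4)
  have t3: "norm (bh - B) = norm (h - G *v B - G *v (bh - B))" using eq by (rule arg_cong)
  have "norm (bh - B) \<le> norm h + norm (G *v B) + norm (G *v (bh - B))"
    using t1 t2 t3 by linarith
  also have "\<dots> \<le> norm h + S * norm B + S * norm (bh - B)"
    using Gv[of B] Gv[of "bh - B"] by linarith
  finally have "norm (bh - B) \<le> norm h + S * norm B + S * norm (bh - B)" .
  moreover have "S * norm (bh - B) \<le> 1/2 * norm (bh - B)" by (rule mult_right_mono[OF S]) simp
  ultimately have n: "norm (bh - B) \<le> 2 * (norm h + S * norm B)" by argo
  have nh: "norm h \<le> (\<Sum>i\<in>UNIV. \<bar>h$i\<bar>)" by (rule norm_le_l1_cart)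
  have "\<bar>bh$i - B$i\<bar> \<le> norm (bh - B)" by (metis component_le_norm_cart vector_minus_component)
  also have "\<dots> \<le> 2 * ((\<Sum>i\<in>UNIV. \<bar>h$i\<bar>) + S * norm B)" using n nh by argo
  also have "\<dots> \<le> 2 * (1 + norm B) * Z"
  proof -
    have "S * norm B \<le> Z * norm B" using h0 unfolding Z_def S_def by (intro mult_right_mono) auto
    moreover have "(\<Sum>i\<in>UNIV. \<bar>h$i\<bar>) \<le> Z" using S0 unfolding Z_def S_def by linarith
    moreover have "2*(1+norm B)*Z = 2*Z + 2*(Z*norm B)" by (simp add: algebra_simps)
    ultimately show ?thesis by argo
  qed
  finally show ?thesis unfolding bh_def .
qed


lemma sum_option: "(\<Sum>j\<in>(UNIV::'a::finite option set). f j) = f None + (\<Sum>i\<in>UNIV. f (Some i))"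
proof -
  have "(\<Sum>j\<in>(UNIV::'a option set). f j) = (\<Sum>j\<in>insert None (range Some). f j)"
    by (simp add: UNIV_option_conv[symmetric])
  also have "\<dots> = f None + (\<Sum>j\<in>range Some. f j)" by (subst sum.insert) auto
  also have "(\<Sum>j\<in>range Some. f j) = (\<Sum>i\<in>UNIV. f (Some i))"
    by (subst sum.reindex) (auto simp: inj_def)
  finally show ?thesis .
qed

definition coef :: "real^'p \<Rightarrow> 'p option \<Rightarrow> real" where
  "coef v j = (case j of None \<Rightarrow> 1 | Some i \<Rightarrow> - v$i)"

lemma resid_expand:
  fixes x :: "nat \<Rightarrow> real^'p"
  shows "(\<lambda>k. y k - x k \<bullet> v) = (\<lambda>k. \<Sum>j\<in>UNIV. coef v j * yx_var y x j k)"
  by (auto simp: sum_option coef_def yx_var_def inner_vec_def sum_negf mult.commute)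

lemma swap4:
  "(\<Sum>k\<in>A. \<Sum>k'\<in>A. \<Sum>j\<in>I. \<Sum>l\<in>J. F k k' j l) = (\<Sum>j\<in>I. \<Sum>l\<in>J. \<Sum>k\<in>A. \<Sum>k'\<in>A. F k k' j l)"
proof -
  have "(\<Sum>k\<in>A. \<Sum>k'\<in>A. \<Sum>j\<in>I. \<Sum>l\<in>J. F k k' j l) = (\<Sum>k\<in>A. \<Sum>j\<in>I. \<Sum>k'\<in>A. \<Sum>l\<in>J. F k k' j l)"
    by (rule sum.cong[OF refl], rule sum.swap)
  also have "\<dots> = (\<Sum>k\<in>A. \<Sum>j\<in>I. \<Sum>l\<in>J. \<Sum>k'\<in>A. F k k' j l)"
    by (rule sum.cong[OF refl], rule sum.cong[OF refl], rule sum.swap)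
  also have "\<dots> = (\<Sum>j\<in>I. \<Sum>k\<in>A. \<Sum>l\<in>J. \<Sum>k'\<in>A. F k k' j l)"
    by (rule sum.swap)
  also have "\<dots> = (\<Sum>j\<in>I. \<Sum>l\<in>J. \<Sum>k\<in>A. \<Sum>k'\<in>A. F k k' j l)"
    by (rule sum.cong[OF refl], rule sum.swap)
  finally show ?thesis .
qed

lemma quad_bilin:
  fixes c :: "nat \<Rightarrow> real"
  shows "quad_est Om S (\<lambda>k. c k * (\<Sum>j\<in>I. a j * f j k)) (\<lambda>k. c k * (\<Sum>l\<in>J. b l * g l k))
   = (\<Sum>j\<in>I. \<Sum>l\<in>J. a j * b l * quad_est Om S (\<lambda>k. c k * f j k) (\<lambda>k. c k * g l k))"
proof -
  have "quad_est Om S (\<lambda>k. c k * (\<Sum>j\<in>I. a j * f j k)) (\<lambda>k. c k * (\<Sum>l\<in>J. b l * g l k))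
    = (\<Sum>k\<in>S. \<Sum>k'\<in>S. \<Sum>j\<in>I. \<Sum>l\<in>J. a j * b l * (Om S k k' * (c k * f j k) * (c k' * g l k')))"
    unfolding quad_est_def
    by (simp add: sum_distrib_left sum_distrib_right mult_ac)
  also have "\<dots> = (\<Sum>j\<in>I. \<Sum>l\<in>J. \<Sum>k\<in>S. \<Sum>k'\<in>S. a j * b l * (Om S k k' * (c k * f j k) * (c k' * g l k')))"
    by (rule swap4)
  also have "\<dots> = (\<Sum>j\<in>I. \<Sum>l\<in>J. a j * b l * quad_est Om S (\<lambda>k. c k * f j k) (\<lambda>k. c k * g l k))"
    unfolding quad_est_def by (simp add: sum_distrib_left)
  finally show ?thesis .
qed

lemma ht_lin:
  fixes c :: "nat \<Rightarrow> real"
  shows "ht_total p S (\<lambda>k. c k * (\<Sum>j\<in>I. a j * f j k)) = (\<Sum>j\<in>I. a j * ht_total p S (\<lambda>k. c k * f j k))"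
proof -
  have "ht_total p S (\<lambda>k. c k * (\<Sum>j\<in>I. a j * f j k)) = (\<Sum>k\<in>S. \<Sum>j\<in>I. a j * (1 / incl_prob p k * (c k * f j k)))"
    unfolding ht_total_def by (simp add: sum_distrib_left mult_ac)
  also have "\<dots> = (\<Sum>j\<in>I. \<Sum>k\<in>S. a j * (1 / incl_prob p k * (c k * f j k)))" by (rule sum.swap)
  also have "\<dots> = (\<Sum>j\<in>I. a j * ht_total p S (\<lambda>k. c k * f j k))"
    unfolding ht_total_def by (simp add: sum_distrib_left)
  finally show ?thesis .
qed

lemma pmf_cov_bilin:
  fixes f g :: "'i \<Rightarrow> 'a \<Rightarrow> real"
  assumes fin: "finite (set_pmf p)" and I: "finite I" and J: "finite J"
  shows "pmf_cov p (\<lambda>\<omega>. \<Sum>j\<in>I. a j * f j \<omega>) (\<lambda>\<omega>. \<Sum>l\<in>J. b l * g l \<omega>)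
       = (\<Sum>j\<in>I. \<Sum>l\<in>J. a j * b l * pmf_cov p (f j) (g l))"
proof -
  note int = integrable_measure_pmf_finite[OF fin]
  let ?E = "measure_pmf.expectation p"
  have E1: "?E (\<lambda>\<omega>. \<Sum>j\<in>I. a j * f j \<omega>) = (\<Sum>j\<in>I. a j * ?E (f j))"
    by (simp add: int)
  have E2: "?E (\<lambda>\<omega>. \<Sum>l\<in>J. b l * g l \<omega>) = (\<Sum>l\<in>J. b l * ?E (g l))"
    by (simp add: int)
  have pt: "((\<Sum>j\<in>I. a j * f j \<omega>) - (\<Sum>j\<in>I. a j * ?E (f j))) * ((\<Sum>l\<in>J. b l * g l \<omega>) - (\<Sum>l\<in>J. b l * ?E (g l)))
     = (\<Sum>j\<in>I. \<Sum>l\<in>J. a j * b l * ((f j \<omega> - ?E (f j)) * (g l \<omega> - ?E (g l))))" for \<omega>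
    by (simp add: sum_subtractf[symmetric] right_diff_distrib[symmetric] sum_product mult_ac)
  show ?thesis
    unfolding pmf_cov_def E1 E2 pt by (simp add: int)
qed

lemma hcov_bilin:
  fixes f g :: "'i \<Rightarrow> nat \<Rightarrow> real"
  assumes "finite (set_pmf pA)" "finite (set_pmf pB)" "finite I" "finite J"
  shows "hartley_cov pA pB A B eta (\<lambda>k. \<Sum>j\<in>I. a j * f j k) (\<lambda>k. \<Sum>l\<in>J. b l * g l k)
      = (\<Sum>j\<in>I. \<Sum>l\<in>J. a j * b l * hartley_cov pA pB A B eta (f j) (g l))"
  unfolding hartley_cov_def ht_lin
  by (simp add: pmf_cov_bilin assms sum.distrib distrib_left)

lemma hest_bilin:
  fixes f g :: "'i \<Rightarrow> nat \<Rightarrow> real"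
  shows "hartley_cov_est OmA OmB A B eta s (\<lambda>k. \<Sum>j\<in>I. a j * f j k) (\<lambda>k. \<Sum>l\<in>J. b l * g l k)
      = (\<Sum>j\<in>I. \<Sum>l\<in>J. a j * b l * hartley_cov_est OmA OmB A B eta s (f j) (g l))"
  unfolding hartley_cov_est_def quad_bilin
  by (simp add: sum.distrib distrib_left)


theorem theorem2:
  fixes Af Bf :: "nat \<Rightarrow> nat set"
    and pA pB :: "nat \<Rightarrow> nat set pmf"
    and nA nB :: "nat \<Rightarrow> nat"
    and eta c1 c2 c3 :: real
    and y :: "nat \<Rightarrow> nat \<Rightarrow> real"
    and x :: "nat \<Rightarrow> nat \<Rightarrow> real ^ 'p"
    and OmA OmB :: "nat \<Rightarrow> nat set \<Rightarrow> nat \<Rightarrow> nat \<Rightarrow> real"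
    and Sig :: "'p option \<Rightarrow> 'p option \<Rightarrow> real"
  assumes frames: "\<And>N. Af N \<union> Bf N = {1..N}"
    and designA: "\<And>N. set_pmf (pA N) \<subseteq> {S. S \<subseteq> Af N \<and> card S = nA N}"
    and designB: "\<And>N. set_pmf (pB N) \<subseteq> {S. S \<subseteq> Bf N \<and> card S = nB N}"
    and domains_nonempty: "eventually (\<lambda>N. Af N - Bf N \<noteq> {} \<and> Bf N - Af N \<noteq> {}) sequentially"
    and eta: "0 < eta" "eta < 1"
    and NA_lim: "filterlim (\<lambda>N. card (Af N)) at_top sequentially"
    and NB_lim: "filterlim (\<lambda>N. card (Bf N)) at_top sequentially"
    and nA_lim: "filterlim nA at_top sequentially"
    and nB_lim: "filterlim nB at_top sequentially"
    and c1: "(\<lambda>N. real (nA N) / real (nA N + nB N)) \<longlonglongrightarrow> c1" "0 < c1" "c1 < 1"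
    and c2: "(\<lambda>N. real (card (Af N - Bf N)) / real (card (Af N))) \<longlonglongrightarrow> c2" "0 < c2" "c2 < 1"
    and c3: "(\<lambda>N. real (card (Bf N - Af N)) / real (card (Bf N))) \<longlonglongrightarrow> c3" "0 < c3" "c3 < 1"
    \<comment> \<open>(A1)\<close>
    and A1_BU: "eventually (\<lambda>N. invertible (\<Sum>k\<in>{1..N}. outer (x N k))) sequentially"
      "convergent (\<lambda>N. matrix_inv (\<Sum>k\<in>{1..N}. outer (x N k)) *v (\<Sum>k\<in>{1..N}. y N k *\<^sub>R x N k))"
    and A1_xx: "\<And>i j. op1 (\<lambda>N. pair_pmf (pA N) (pB N))
       (\<lambda>N s. (matrix_inv (\<Sum>k\<in>{1..N}. outer (x N k))
               ** hartley_sum (pA N) (pB N) (Af N) (Bf N) eta s (\<lambda>k. outer (x N k)) - mat 1) $ i $ j)"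
    and A1_xy: "\<And>i. op1 (\<lambda>N. pair_pmf (pA N) (pB N))
       (\<lambda>N s. (matrix_inv (\<Sum>k\<in>{1..N}. outer (x N k))
               *v (hartley_sum (pA N) (pB N) (Af N) (Bf N) eta s (\<lambda>k. y N k *\<^sub>R x N k)
                   - (\<Sum>k\<in>{1..N}. y N k *\<^sub>R x N k))) $ i)"
    \<comment> \<open>(A2)\<close>
    and A2_lim: "\<And>j l. (\<lambda>N. real (nA N + nB N) / (real N)\<^sup>2 *
        hartley_cov (pA N) (pB N) (Af N) (Bf N) eta (yx_var (y N) (x N) j) (yx_var (y N) (x N) l))
        \<longlonglongrightarrow> Sig j l"
    and A2_pd: "pos_def Sig"
    \<comment> \<open>(A4)\<close>
    and A4: "\<And>j l. op1 (\<lambda>N. pair_pmf (pA N) (pB N))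
       (\<lambda>N s. real (nA N + nB N) / (real N)\<^sup>2 *
          hartley_cov_est (OmA N) (OmB N) (Af N) (Bf N) eta s
            (yx_var (y N) (x N) j) (yx_var (y N) (x N) l) - Sig j l)"
  shows "op1 (\<lambda>N. pair_pmf (pA N) (pB N))
    (\<lambda>N s. real (nA N + nB N) / (real N)\<^sup>2 *
       (hartley_cov_est (OmA N) (OmB N) (Af N) (Bf N) eta s
          (\<lambda>k. y N k - x N k \<bullet> (matrix_inv (hartley_sum (pA N) (pB N) (Af N) (Bf N) eta s (\<lambda>k. outer (x N k)))
                   *v hartley_sum (pA N) (pB N) (Af N) (Bf N) eta s (\<lambda>k. y N k *\<^sub>R x N k)))
          (\<lambda>k. y N k - x N k \<bullet> (matrix_inv (hartley_sum (pA N) (pB N) (Af N) (Bf N) eta s (\<lambda>k. outer (x N k)))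
                   *v hartley_sum (pA N) (pB N) (Af N) (Bf N) eta s (\<lambda>k. y N k *\<^sub>R x N k)))
        - hartley_cov (pA N) (pB N) (Af N) (Bf N) eta
          (\<lambda>k. y N k - x N k \<bullet> (matrix_inv (\<Sum>k\<in>{1..N}. outer (x N k)) *v (\<Sum>k\<in>{1..N}. y N k *\<^sub>R x N k)))
          (\<lambda>k. y N k - x N k \<bullet> (matrix_inv (\<Sum>k\<in>{1..N}. outer (x N k)) *v (\<Sum>k\<in>{1..N}. y N k *\<^sub>R x N k)))))"
proof -
  define P where "P = (\<lambda>N. pair_pmf (pA N) (pB N))"
  define sc where "sc = (\<lambda>N. real (nA N + nB N) / (real N)\<^sup>2)"
  define Mi where "Mi = (\<lambda>N. matrix_inv (\<Sum>k\<in>{1..N}. outer (x N k)))"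
  define t where "t = (\<lambda>N. (\<Sum>k\<in>{1..N}. y N k *\<^sub>R x N k))"
  define BU where "BU = (\<lambda>N. Mi N *v t N)"
  define Hxx where "Hxx = (\<lambda>N s. hartley_sum (pA N) (pB N) (Af N) (Bf N) eta s (\<lambda>k. outer (x N k)))"
  define Hxy where "Hxy = (\<lambda>N s. hartley_sum (pA N) (pB N) (Af N) (Bf N) eta s (\<lambda>k. y N k *\<^sub>R x N k))"
  define bh where "bh = (\<lambda>N s. matrix_inv (Hxx N s) *v Hxy N s)"
  define Ce where "Ce = (\<lambda>N s j l. hartley_cov_est (OmA N) (OmB N) (Af N) (Bf N) eta s
            (yx_var (y N) (x N) j) (yx_var (y N) (x N) l))"
  define Cv where "Cv = (\<lambda>N j l. hartley_cov (pA N) (pB N) (Af N) (Bf N) eta (yx_var (y N) (x N) j) (yx_var (y N) (x N) l))"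
  have finA: "finite (set_pmf (pA N))" for N
  proof -
    have "set_pmf (pA N) \<subseteq> Pow {1..N}" using designA[of N] frames[of N] by auto
    then show ?thesis by (rule finite_subset) simp
  qed
  have finB: "finite (set_pmf (pB N))" for N
  proof -
    have "set_pmf (pB N) \<subseteq> Pow {1..N}" using designB[of N] frames[of N] by auto
    then show ?thesis by (rule finite_subset) simp
  qed
  have "Bseq BU" using convergent_imp_Bseq[OF A1_BU(2)] unfolding BU_def Mi_def t_def .
  then obtain KB where KB0: "KB > 0" and KBa: "\<forall>N. norm (BU N) \<le> KB" by (rule BseqE)
  have KB: "KB > 0" "\<And>N. norm (BU N) \<le> KB" using KB0 KBa by auto
  have coefB: "\<bar>coef (BU N) j\<bar> \<le> 1 + KB" for N j
  proof (cases j)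
    case None then show ?thesis using KB by (simp add: coef_def)
  next
    case (Some i)
    have "\<bar>BU N $ i\<bar> \<le> KB" using component_le_norm_cart[of "BU N" i] KB(2)[of N] by linarith
    then show ?thesis using Some by (simp add: coef_def)
  qed
  define Z where "Z = (\<lambda>N s. (\<Sum>i\<in>UNIV. \<Sum>j\<in>UNIV. \<bar>(Mi N ** Hxx N s - mat 1)$i$j\<bar>) + (\<Sum>i\<in>UNIV. \<bar>(Mi N *v (Hxy N s - t N))$i\<bar>))"
  have opZ: "op1 P Z"
    unfolding Z_def P_def Mi_def Hxx_def Hxy_def t_def
    by (intro op1_add op1_sum op1_abs A1_xx A1_xy) simp_all
  have delta: "op1 P (\<lambda>N s. bh N s $ i - BU N $ i)" for i
  proof (rule op1_dominate[OF opZ, of "2 * (1 + KB)" "1/2"])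
    show "eventually (\<lambda>N. \<forall>s. \<bar>Z N s\<bar> \<le> 1/2 \<longrightarrow> \<bar>bh N s $ i - BU N $ i\<bar> \<le> 2 * (1 + KB) * \<bar>Z N s\<bar>) sequentially"
    proof (intro always_eventually allI impI)
      fix N s assume h: "\<bar>Z N s\<bar> \<le> 1/2"
      have Z0: "0 \<le> Z N s" unfolding Z_def by (intro add_nonneg_nonneg sum_nonneg) auto
      have "\<bar>bh N s $ i - BU N $ i\<bar> \<le> 2 * (1 + norm (BU N)) * Z N s"
        unfolding bh_def BU_def Z_def
        by (rule matrix_key) (use h Z0 in \<open>simp add: Z_def\<close>)
      also have "\<dots> \<le> 2 * (1 + KB) * Z N s"
        using KB(2)[of N] Z0 by (intro mult_right_mono) auto
      finally show "\<bar>bh N s $ i - BU N $ i\<bar> \<le> 2 * (1 + KB) * \<bar>Z N s\<bar>" using Z0 by simp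
    qed
  qed (use KB in auto)
  have dcoef: "op1 P (\<lambda>N s. coef (bh N s) j - coef (BU N) j)" for j
  proof (cases j)
    case None then show ?thesis by (simp add: coef_def op1_zero)
  next
    case (Some i)
    show ?thesis
      by (rule op1_cong[OF op1_neg[OF delta[of i]]]) (simp add: Some coef_def)
  qed
  have terms: "op1 P (\<lambda>N s. coef (bh N s) j * coef (bh N s) l * (sc N * Ce N s j l)
                 - coef (BU N) j * coef (BU N) l * (sc N * Cv N j l))" for j l
  proof (rule op1_term[where S = "Sig j l" and K = "1 + KB"])
    show "op1 P (\<lambda>N s. sc N * Ce N s j l - Sig j l)"
      using A4[of j l] unfolding P_def sc_def Ce_def .
    show "(\<lambda>N. sc N * Cv N j l - Sig j l) \<longlonglongrightarrow> 0"
      using LIM_zero[OF A2_lim[of j l]] unfolding sc_def Cv_def .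
  qed (use coefB dcoef in auto)
  have sumop: "op1 P (\<lambda>N s. \<Sum>j\<in>UNIV. \<Sum>l\<in>UNIV. coef (bh N s) j * coef (bh N s) l * (sc N * Ce N s j l)
                 - coef (BU N) j * coef (BU N) l * (sc N * Cv N j l))"
    by (intro op1_sum terms) simp_all
  have eq: "(\<Sum>j\<in>UNIV. \<Sum>l\<in>UNIV. coef (bh N s) j * coef (bh N s) l * (sc N * Ce N s j l)
                 - coef (BU N) j * coef (BU N) l * (sc N * Cv N j l))
     = sc N * (hartley_cov_est (OmA N) (OmB N) (Af N) (Bf N) eta s
          (\<lambda>k. y N k - x N k \<bullet> bh N s) (\<lambda>k. y N k - x N k \<bullet> bh N s)
        - hartley_cov (pA N) (pB N) (Af N) (Bf N) eta
          (\<lambda>k. y N k - x N k \<bullet> BU N) (\<lambda>k. y N k - x N k \<bullet> BU N))" for N s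
    unfolding resid_expand hest_bilin hcov_bilin[OF finA finB finite_class.finite_UNIV finite_class.finite_UNIV] Ce_def Cv_def
    by (simp add: sum_subtractf sum_distrib_left right_diff_distrib mult_ac)
  show ?thesis
    using op1_cong[OF sumop eq]
    unfolding P_def sc_def bh_def BU_def Hxx_def Hxy_def Mi_def t_def .
qed

end
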